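(* Let $v\ge2$ and $k\in\{5,6\}$. Then an optimum $(d,3)$-CDA$((d+1)v^3;k,v)$ exists for every positive integer $d$ with $d+1\le v$.
   Context: Consecutive $t$-way interaction in an $N\times k$ array $A=(a_{ij})$ over a $v$-set $V$: $T=\{(i,x_i),\dots,(i+t-1,x_{i+t-1})\}$, $1\le i\le k-t+1$, $x_r\in V$; $\rho(A,T)=\{r: a_{r,j}=x_j\ \forall (j,x_j)\in T\}$, $\rho(A,\mathcal T)=\bigcup_{T\in\mathcal T}\rho(A,T)$. A $(d,t)$-CDA$(N;k,v)$ is an $N\times k$ array over $V$ in which every $t$ consecutive columns contain every $t$-tuple at least once, and such that for every set $\mathcal T$ of exactly $d$ distinct consecutive $t$-way interactions and every consecutive $t$-way interaction $T$: $\rho(A,T)\subseteq\rho(A,\mathcal T)$ iff $T\in\mathcal T$. It is optimum if $N=(d+1)v^t$. *)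

theory Defs
  imports Main
begin

(* An N x k array over V is a function A :: nat => nat => 'a; rows are 0..<N,
   columns are 0..<k (0-indexed). *)

definition is_array :: "nat \<Rightarrow> nat \<Rightarrow> 'a set \<Rightarrow> (nat \<Rightarrow> nat \<Rightarrow> 'a) \<Rightarrow> bool" where
  "is_array N k V A \<longleftrightarrow> (\<forall>r<N. \<forall>j<k. A r j \<in> V)"

definition consec_interactions :: "nat \<Rightarrow> nat \<Rightarrow> 'a set \<Rightarrow> (nat \<times> 'a) set set" where
  "consec_interactions t k V =
     {T. \<exists>i f. i + t \<le> k \<and> (\<forall>j\<in>{i..<i+t}. f j \<in> V) \<and>
              T = (\<lambda>j. (j, f j)) ` {i..<i+t}}"

definition rho :: "nat \<Rightarrow> (nat \<Rightarrow> nat \<Rightarrow> 'a) \<Rightarrow> (nat \<times> 'a) set \<Rightarrow> nat set" where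
  "rho N A T = {r. r < N \<and> (\<forall>(j, x)\<in>T. A r j = x)}"

definition rho_set :: "nat \<Rightarrow> (nat \<Rightarrow> nat \<Rightarrow> 'a) \<Rightarrow> (nat \<times> 'a) set set \<Rightarrow> nat set" where
  "rho_set N A \<T> = (\<Union>T\<in>\<T>. rho N A T)"

definition is_CDA :: "nat \<Rightarrow> nat \<Rightarrow> nat \<Rightarrow> nat \<Rightarrow> 'a set \<Rightarrow> (nat \<Rightarrow> nat \<Rightarrow> 'a) \<Rightarrow> bool" where
  "is_CDA d t N k V A \<longleftrightarrow>
     is_array N k V A \<and>
     (\<forall>T\<in>consec_interactions t k V. rho N A T \<noteq> {}) \<and>
     (\<forall>\<T>. \<T> \<subseteq> consec_interactions t k V \<and> finite \<T> \<and> card \<T> = d \<longrightarrow>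
        (\<forall>T\<in>consec_interactions t k V. rho N A T \<subseteq> rho_set N A \<T> \<longleftrightarrow> T \<in> \<T>))"

definition is_optimum_CDA :: "nat \<Rightarrow> nat \<Rightarrow> nat \<Rightarrow> nat \<Rightarrow> 'a set \<Rightarrow> (nat \<Rightarrow> nat \<Rightarrow> 'a) \<Rightarrow> bool" where
  "is_optimum_CDA d t N k V A \<longleftrightarrow> is_CDA d t N k V A \<and> N = (d + 1) * card V ^ t"

end

theory Submission
  imports Defs
begin

definition cE :: "nat \<Rightarrow> nat \<Rightarrow> nat" where "cE d r = r mod (d+1)"
definition cQ :: "nat \<Rightarrow> nat \<Rightarrow> nat" where "cQ d r = r div (d+1)"
definition cD :: "nat \<Rightarrow> nat \<Rightarrow> nat \<Rightarrow> nat \<Rightarrow> nat" where "cD d v r m = (cQ d r div v^m) mod v"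
definition cA :: "nat \<Rightarrow> nat \<Rightarrow> nat \<Rightarrow> nat \<Rightarrow> nat" where
  "cA d v r j = (cD d v r (j mod 3) + (j div 3) * cE d r) mod v"

lemma mod_cancel_lt:
  fixes D x y v :: nat
  assumes "(D + x) mod v = (D + y) mod v" "x < v" "y < v"
  shows "x = y"
proof -
  { fix x y :: nat assume xy: "x \<le> y" and h: "(D + x) mod v = (D + y) mod v" and yv: "y < v"
    have le: "D + x \<le> D + y" using xy by simp
    have "v dvd (D + y) - (D + x)" using iffD1[OF mod_eq_dvd_iff_nat[OF le] h[symmetric]] .
    then have "v dvd y - x" by simp
    moreover have "y - x < v" using yv by simp
    ultimately have "y - x = 0"
    proof -
      assume d: "v dvd y - x" and l: "y - x < v"
      show "y - x = 0"
      proof (rule ccontr)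
        assume "y - x \<noteq> 0"
        then have "v \<le> y - x" using dvd_imp_le d by blast
        then show False using l by simp
      qed
    qed
    then have "x = y" using xy by simp }
  note * = this
  show ?thesis
  proof (cases "x \<le> y")
    case True then show ?thesis using *[of x y] assms by blast
  next
    case False then have "y \<le> x" by simp
    then show ?thesis using *[of y x] assms(1)[symmetric] assms(2) by simp
  qed
qed

lemma lt_comb:
  fixes a b m n :: nat
  assumes "a < m" "b < n"
  shows "a + m * b < m * n"
proof -
  have "a + m*b < m + m*b" using assms by simp
  also have "\<dots> = m * (b+1)" by simp
  also have "\<dots> \<le> m * n" using assms by (intro mult_le_mono2) simp
  finally show ?thesis .
qed

lemma recon:
  fixes q v :: nat
  assumes "q < v^3"
  shows "q = q mod v + v * ((q div v) mod v) + v * v * ((q div v^2) mod v)"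
proof -
  have v: "v > 0" using assms by (cases v) auto
  have e2: "q div v^2 = q div v div v" by (simp add: power2_eq_square div_mult2_eq)
  have "q < v * v^2" using assms by (simp add: power_Suc numeral_3_eq_3 power2_eq_square)
  then have "q div v^2 < v" by (rule less_mult_imp_div_less)
  then have m2: "(q div v^2) mod v = q div v div v" using e2 by simp
  have h1: "q = q mod v + v * (q div v)" by simp
  have h2: "q div v = (q div v) mod v + v * (q div v div v)" by simp
  have h: "q = q mod v + v * ((q div v) mod v + v * (q div v div v))" by simp
  show ?thesis unfolding m2 by (metis h distrib_left mult.assoc add.assoc)
qed

lemma decode:
  fixes d v e D0 D1 D2 :: nat
  assumes "e \<le> d" "D0 < v" "D1 < v" "D2 < v"
  defines "r \<equiv> e + (d+1) * (D0 + v * D1 + v * v * D2)"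
  shows "cE d r = e" "cD d v r 0 = D0" "cD d v r 1 = D1" "cD d v r 2 = D2"
    "r < (d+1) * v^3"
proof -
  have v: "v > 0" using assms by auto
  have "(e + (d+1) * (D0 + v * D1 + v * v * D2)) div (d+1) = (D0 + v * D1 + v * v * D2) + e div (d+1)"
    by (rule div_mult_self2) simp
  then have Q: "cQ d r = D0 + v * D1 + v * v * D2" unfolding cQ_def r_def using assms(1) by simp
  have "(e + (d+1) * (D0 + v * D1 + v * v * D2)) mod (d+1) = e mod (d+1)"
    by (rule mod_mult_self2)
  then show "cE d r = e" unfolding cE_def r_def using assms(1) by simp
  have re: "D0 + v*D1 + v*v*D2 = D0 + v*(D1 + v*D2)" by (simp add: algebra_simps)
  have "(D0 + v*(D1 + v*D2)) mod v = D0" using assms(2) by simp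
  then show "cD d v r 0 = D0" unfolding cD_def Q re by simp
  have "(D0 + v * D1 + v * v * D2) div v = D1 + v * D2" unfolding re using assms(2) v
    by simp
  then show "cD d v r 1 = D1" unfolding cD_def Q using assms(2-4) v by simp
  have "(D0 + v * D1 + v * v * D2) div v^2 = (D0 + v * D1 + v * v * D2) div v div v"
    by (simp add: power2_eq_square div_mult2_eq)
  also have "\<dots> = D2" unfolding re using assms(2-4) v by simp
  finally show "cD d v r 2 = D2" unfolding cD_def Q using assms(2-4) v by simp
  have "D0 + v * D1 < v * v" using lt_comb assms by blast
  then have "D0 + v * D1 + (v * v) * D2 < (v * v) * v" using lt_comb assms by blast
  then have "D0 + v * D1 + v * v * D2 < v^3" by (simp add: power3_eq_cube)
  then show "r < (d+1) * v^3" unfolding r_def using lt_comb[of e "d+1"] assms(1) by simp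
qed

lemma cD_lt: "v > 0 \<Longrightarrow> cD d v r m < v" unfolding cD_def by simp
lemma cE_lt: "cE d r < d + 1" unfolding cE_def by simp

lemma agree4:
  fixes d v r s i :: nat
  assumes dv: "d < v" and r: "r < (d+1)*v^3" and s: "s < (d+1)*v^3" and i: "i \<le> 2"
    and ag: "\<And>j. i \<le> j \<Longrightarrow> j \<le> i + 3 \<Longrightarrow> cA d v r j = cA d v s j"
  shows "r = s"
proof -
  have v: "v > 0" using dv by simp
  have Ai: "cA d v x i = cD d v x i" for x
    using i v cD_lt[of v d x i] unfolding cA_def by simp
  have Ai3: "cA d v x (i+3) = (cD d v x i + cE d x) mod v" for x
  proof -
    have "(i+3) div 3 = 1" "(i+3) mod 3 = i" using i by simp_all
    then show ?thesis unfolding cA_def by simp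
  qed
  have Di: "cD d v r i = cD d v s i" using ag[of i] Ai by simp
  have E: "cE d r = cE d s"
    using ag[of "i+3"] Ai3 Di mod_cancel_lt[of "cD d v s i" "cE d r" v "cE d s"]
      cE_lt[of d r] cE_lt[of d s] dv by simp
  have Dm: "cD d v r m = cD d v s m" if m: "m < 3" for m
  proof -
    define j where "j = (if i \<le> m then m else m + 3)"
    have jm: "j mod 3 = m" unfolding j_def using m by simp
    have jr: "i \<le> j" "j \<le> i + 3" unfolding j_def using m i by auto
    have "(cD d v r m + (j div 3) * cE d r) mod v = (cD d v s m + (j div 3) * cE d r) mod v"
      using ag[OF jr] E jm unfolding cA_def by simp
    then have "((j div 3) * cE d r + cD d v r m) mod v = ((j div 3) * cE d r + cD d v s m) mod v"
      by (simp only: add.commute)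
    then show ?thesis by (rule mod_cancel_lt) (rule cD_lt[OF v])+
  qed
  have qr: "cQ d r < v^3" unfolding cQ_def using r by (simp add: less_mult_imp_div_less mult.commute)
  have qs: "cQ d s < v^3" unfolding cQ_def using s by (simp add: less_mult_imp_div_less mult.commute)
  have D0: "cQ d r mod v = cQ d s mod v" using Dm[of 0] unfolding cD_def by simp
  have D1: "(cQ d r div v) mod v = (cQ d s div v) mod v" using Dm[of 1] unfolding cD_def by simp
  have D2: "(cQ d r div v^2) mod v = (cQ d s div v^2) mod v" using Dm[of 2] unfolding cD_def by simp
  have "cQ d r = cQ d s"
    by (rule trans[OF recon[OF qr]]) (simp only: D0 D1 D2 recon[OF qs, symmetric])
  then show ?thesis using E unfolding cQ_def cE_def by (metis div_mult_mod_eq)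
qed

lemma cover:
  fixes d v i e :: nat and f :: "nat \<Rightarrow> nat"
  assumes dv: "d < v" and i: "i \<le> 3" and f: "\<forall>j\<in>{i..<i+3}. f j < v" and e: "e \<le> d"
  shows "\<exists>r. r < (d+1)*v^3 \<and> cE d r = e \<and> (\<forall>j\<in>{i..<i+3}. cA d v r j = f j)"
proof -
  have v: "v > 0" using dv by simp
  define jj where "jj m = i + ((m + 3 - i mod 3) mod 3)" for m :: nat
  define D where "D m = (f (jj m) + (v - e) * (jj m div 3)) mod v" for m
  define r where "r = e + (d+1) * (D 0 + v * D 1 + v * v * D 2)"
  have Dl: "D m < v" for m unfolding D_def using v by simp
  note dec = decode[OF e Dl Dl Dl, of 0 1 2, folded r_def]
  have cDm: "cD d v r m = D m" if "m < 3" for m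
    using that dec by (cases m; cases "m - 1"; auto simp: numeral_2_eq_2)
  have "cA d v r j = f j" if j: "j \<in> {i..<i+3}" for j
  proof -
    define q where "q = j div 3"
    have j1: "i \<le> j" "j < i + 3" using j by auto
    have "i = 0 \<or> i = 1 \<or> i = 2 \<or> i = 3" using i by auto
    moreover have "j = i \<or> j = i + 1 \<or> j = i + 2" using j1 by auto
    ultimately have jjj: "jj (j mod 3) = j" unfolding jj_def by (elim disjE) simp_all
    have A: "cA d v r j = (D (j mod 3) + q * e) mod v"
      unfolding cA_def q_def using cDm dec(1) by simp
    also have "\<dots> = ((f j + (v - e) * q) mod v + q * e) mod v" unfolding D_def jjj q_def by simp
    also have "\<dots> = (f j + (v - e) * q + q * e) mod v" by (simp add: mod_add_left_eq)
    also have "(v - e) * q + q * e = q * v" using e dv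
      by (simp add: diff_mult_distrib algebra_simps)
    then have "f j + (v - e) * q + q * e = f j + q * v" by simp
    finally show ?thesis using f j by simp
  qed
  then show ?thesis using dec by blast
qed

lemma rho_img: "rho N A ((\<lambda>j. (j, f j)) ` W) = {r. r < N \<and> (\<forall>j\<in>W. A r j = f j)}"
  unfolding rho_def by auto

lemma card_rho:
  fixes d v k :: nat and T :: "(nat \<times> nat) set"
  assumes dv: "d < v" and k: "k \<le> 6" and T: "T \<in> consec_interactions 3 k {0..<v}"
  shows "d + 1 \<le> card (rho ((d+1)*v^3) (cA d v) T)"
proof -
  obtain i f where i: "i + 3 \<le> k" and f: "\<forall>j\<in>{i..<i+3}. f j \<in> {0..<v}"
    and Tdef: "T = (\<lambda>j. (j, f j)) ` {i..<i+3}"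
    using T unfolding consec_interactions_def by blast
  have "\<forall>e. \<exists>r. e \<le> d \<longrightarrow> r < (d+1)*v^3 \<and> cE d r = e \<and> (\<forall>j\<in>{i..<i+3}. cA d v r j = f j)"
    using cover[OF dv, of i f] i k f by auto
  then obtain g where g: "\<And>e. e \<le> d \<Longrightarrow> g e < (d+1)*v^3 \<and> cE d (g e) = e \<and> (\<forall>j\<in>{i..<i+3}. cA d v (g e) j = f j)"
    by metis
  have sub: "g ` {0..d} \<subseteq> rho ((d+1)*v^3) (cA d v) T"
    unfolding Tdef rho_img using g by auto
  have inj: "inj_on g {0..d}" by (rule inj_onI) (metis g atLeastAtMost_iff)
  have fin: "finite (rho ((d+1)*v^3) (cA d v) T)" unfolding rho_def by simp
  have "card (g ` {0..d}) = d + 1" using card_image[OF inj] by simp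
  then show ?thesis using card_mono[OF fin sub] by simp
qed

lemma two_win:
  fixes d v r s i i' :: nat
  assumes dv: "d < v" and r: "r < (d+1)*v^3" and s: "s < (d+1)*v^3"
    and ii: "i' \<le> 3" and lt: "i < i'" and e: "f' = f'"
    and r1: "\<forall>j\<in>{i..<i+3}. cA d v r j = f j" and s1: "\<forall>j\<in>{i..<i+3}. cA d v s j = f j"
    and r2: "\<forall>j\<in>{i'..<i'+3}. cA d v r j = f' j" and s2: "\<forall>j\<in>{i'..<i'+3}. cA d v s j = f' j"
  shows "r = s"
proof (rule agree4[OF dv r s])
  show "i \<le> 2" using ii lt by simp
  fix j assume j: "i \<le> j" "j \<le> i + 3"
  show "cA d v r j = cA d v s j"
  proof (cases "j < i + 3")
    case True
    then show ?thesis using r1 s1 j by simp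
  next
    case False
    then have "j \<in> {i'..<i'+3}" using j ii lt by simp
    then show ?thesis using r2 s2 by simp
  qed
qed

lemma inter_one:
  fixes d v k :: nat and T T' :: "(nat \<times> nat) set"
  assumes dv: "d < v" and k: "k \<le> 6" and T: "T \<in> consec_interactions 3 k {0..<v}"
    and T': "T' \<in> consec_interactions 3 k {0..<v}" and ne: "T \<noteq> T'"
    and r: "r \<in> rho ((d+1)*v^3) (cA d v) T \<inter> rho ((d+1)*v^3) (cA d v) T'"
    and s: "s \<in> rho ((d+1)*v^3) (cA d v) T \<inter> rho ((d+1)*v^3) (cA d v) T'"
  shows "r = s"
proof -
  obtain i f where i: "i + 3 \<le> k" and Tdef: "T = (\<lambda>j. (j, f j)) ` {i..<i+3}"
    using T unfolding consec_interactions_def by blast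
  obtain i' f' where i': "i' + 3 \<le> k" and T'def: "T' = (\<lambda>j. (j, f' j)) ` {i'..<i'+3}"
    using T' unfolding consec_interactions_def by blast
  have rr: "r < (d+1)*v^3" "\<forall>j\<in>{i..<i+3}. cA d v r j = f j" "\<forall>j\<in>{i'..<i'+3}. cA d v r j = f' j"
    using r unfolding Tdef T'def rho_img by auto
  have ss: "s < (d+1)*v^3" "\<forall>j\<in>{i..<i+3}. cA d v s j = f j" "\<forall>j\<in>{i'..<i'+3}. cA d v s j = f' j"
    using s unfolding Tdef T'def rho_img by auto
  have "i \<noteq> i'"
  proof
    assume "i = i'"
    then have "T = T'" unfolding Tdef T'def using rr by (intro image_cong) auto
    then show False using ne by simp
  qed
  then consider "i < i'" | "i' < i" by linarith
  then show ?thesis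
  proof cases
    case 1
    show ?thesis
      using two_win[OF dv rr(1) ss(1) _ 1 _ rr(2) ss(2) rr(3) ss(3)] i' k by simp
  next
    case 2
    show ?thesis
      using two_win[OF dv rr(1) ss(1) _ 2 _ rr(3) ss(3) rr(2) ss(2)] i k by simp
  qed
qed

theorem mainTheorem16:
  fixes v k d :: nat
  assumes "v \<ge> 2" and "k \<in> {5, 6}" and "d > 0" and "d + 1 \<le> v"
  shows "\<exists>A :: nat \<Rightarrow> nat \<Rightarrow> nat.
           is_optimum_CDA d 3 ((d + 1) * v ^ 3) k {0..<v} A"
proof (intro exI)
  let ?N = "(d + 1) * v ^ 3"
  let ?A = "cA d v"
  let ?CI = "consec_interactions 3 k {0..<v} :: (nat \<times> nat) set set"
  have dv: "d < v" and k: "k \<le> 6" and v: "v > 0" using assms by auto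
  have arr: "is_array ?N k {0..<v} ?A" unfolding is_array_def cA_def using v by simp
  have cov: "\<forall>T\<in>?CI. rho ?N ?A T \<noteq> {}"
  proof
    fix T assume "T \<in> ?CI"
    from card_rho[OF dv k this] show "rho ?N ?A T \<noteq> {}" by auto
  qed
  have det: "\<forall>\<T>. \<T> \<subseteq> ?CI \<and> finite \<T> \<and> card \<T> = d \<longrightarrow>
        (\<forall>T\<in>?CI. rho ?N ?A T \<subseteq> rho_set ?N ?A \<T> \<longleftrightarrow> T \<in> \<T>)"
  proof (intro allI impI ballI iffI)
    fix \<T> T assume H: "\<T> \<subseteq> ?CI \<and> finite \<T> \<and> card \<T> = d" and T: "T \<in> ?CI"
    assume "T \<in> \<T>"
    then show "rho ?N ?A T \<subseteq> rho_set ?N ?A \<T>" unfolding rho_set_def by blast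
  next
    fix \<T> T assume H: "\<T> \<subseteq> ?CI \<and> finite \<T> \<and> card \<T> = d" and T: "T \<in> ?CI"
      and sub: "rho ?N ?A T \<subseteq> rho_set ?N ?A \<T>"
    show "T \<in> \<T>"
    proof (rule ccontr)
      assume nT: "T \<notin> \<T>"
      have fin: "finite (rho ?N ?A T)" unfolding rho_def by simp
      have eq: "rho ?N ?A T \<subseteq> (\<Union>T'\<in>\<T>. rho ?N ?A T \<inter> rho ?N ?A T')"
        using sub unfolding rho_set_def by blast
      have one: "card (rho ?N ?A T \<inter> rho ?N ?A T') \<le> 1" if "T' \<in> \<T>" for T'
      proof -
        have "T \<noteq> T'" using that nT by blast
        moreover have "T' \<in> ?CI" using that H by blast
        ultimately have "\<forall>r\<in>rho ?N ?A T \<inter> rho ?N ?A T'. \<forall>s\<in>rho ?N ?A T \<inter> rho ?N ?A T'. r = s"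
          using inter_one[OF dv k T] by blast
        then show ?thesis using card_le_Suc0_iff_eq[of "rho ?N ?A T \<inter> rho ?N ?A T'"] fin by simp
      qed
      have "card (rho ?N ?A T) \<le> card (\<Union>T'\<in>\<T>. rho ?N ?A T \<inter> rho ?N ?A T')"
        using eq H fin by (intro card_mono) auto
      also have "\<dots> \<le> (\<Sum>T'\<in>\<T>. card (rho ?N ?A T \<inter> rho ?N ?A T'))"
        by (rule card_UN_le) (use H in blast)
      also have "\<dots> \<le> (\<Sum>T'\<in>\<T>. 1)" by (rule sum_mono) (rule one)
      also have "\<dots> = d" using H by simp
      finally show False using card_rho[OF dv k T] by simp
    qed
  qed
  show "is_optimum_CDA d 3 ?N k {0..<v} ?A"
    unfolding is_optimum_CDA_def is_CDA_def using arr cov det by simp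
qed

end
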